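(* Let $\gamma>0$ and let $k:\mathbb R_+\to\mathbb R_+$ be a $C^\infty$ function with $k(0)=\gamma$, $k'(x)>0$ for all $x\ge0$, and $k(x)\to+\infty$ as $x\to+\infty$. Define, for $x\ge0$, $$\Psi(x)=\int_0^x k(u)(e^{\gamma u}-1)\,du,$$ let $\Phi'$ be the inverse function of $\Psi':[0,\infty)\to[0,\infty)$ and $\Phi(x)=\int_0^x\Phi'(u)\,du$ (the convex dual of $\Psi$). Let $$\Phi_0(x)=\Big(\frac{x}{\gamma}+1\Big)\ln\Big(\frac{x}{\gamma}+1\Big)-\frac{x}{\gamma}$$ (the convex dual of $\Psi_0(x)=e^{\gamma x}-\gamma x-1$) and $\Lambda=\Phi_0-\Phi$. Then $$\lim_{x\to+\infty}\frac{\Lambda(x)}{x}=+\infty.$$ *)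

theory Defs
  imports "HOL-Analysis.Analysis"
begin

definition Psi :: "(real \<Rightarrow> real) \<Rightarrow> real \<Rightarrow> real \<Rightarrow> real" where
  "Psi k \<gamma> x = integral {0..x} (\<lambda>u. k u * (exp (\<gamma> * u) - 1))"

definition Psi' :: "(real \<Rightarrow> real) \<Rightarrow> real \<Rightarrow> real \<Rightarrow> real" where
  "Psi' k \<gamma> x = k x * (exp (\<gamma> * x) - 1)"

definition Phi' :: "(real \<Rightarrow> real) \<Rightarrow> real \<Rightarrow> real \<Rightarrow> real" where
  "Phi' k \<gamma> = the_inv_into {0..} (Psi' k \<gamma>)"

definition Phi :: "(real \<Rightarrow> real) \<Rightarrow> real \<Rightarrow> real \<Rightarrow> real" where
  "Phi k \<gamma> x = integral {0..x} (Phi' k \<gamma>)"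

definition Phi0 :: "real \<Rightarrow> real \<Rightarrow> real" where
  "Phi0 \<gamma> x = (x / \<gamma> + 1) * ln (x / \<gamma> + 1) - x / \<gamma>"

definition Lambda :: "(real \<Rightarrow> real) \<Rightarrow> real \<Rightarrow> real \<Rightarrow> real" where
  "Lambda k \<gamma> x = Phi0 \<gamma> x - Phi k \<gamma> x"

end

theory Submission
  imports Defs
begin

lemma Phi0_deriv:
  "\<gamma> > 0 \<Longrightarrow> y / \<gamma> + 1 > 0 \<Longrightarrow> (Phi0 \<gamma> has_real_derivative (ln (y / \<gamma> + 1) / \<gamma>)) (at y)"
  unfolding Phi0_def[abs_def]
  apply (rule derivative_eq_intros refl | simp)+
  done

theorem proposition3p3:
  fixes k :: "real \<Rightarrow> real" and \<gamma> :: real and D :: "nat \<Rightarrow> real \<Rightarrow> real"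
  assumes gamma_pos: "\<gamma> > 0"
    and k_nonneg: "\<And>x. x \<ge> 0 \<Longrightarrow> k x \<ge> 0"
    and D0: "D 0 = k"
    and smooth: "\<And>n x. x \<ge> 0 \<Longrightarrow> (D n has_real_derivative D (Suc n) x) (at x within {0..})"
    and k0: "k 0 = \<gamma>"
    and kderiv_pos: "\<And>x. x \<ge> 0 \<Longrightarrow> D 1 x > 0"
    and k_infty: "filterlim k at_top at_top"
  shows "filterlim (\<lambda>x. Lambda k \<gamma> x / x) at_top at_top"
proof -
  define P where "P = Psi' k \<gamma>"
  define Q where "Q = Phi' k \<gamma>"
  have kd: "\<And>x. x \<ge> 0 \<Longrightarrow> (k has_real_derivative D 1 x) (at x within {0..})"
    using smooth[of _ 0] D0 by simp
  have kcont: "continuous_on {0..} k"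
    unfolding continuous_on_eq_continuous_within
    using kd DERIV_continuous by fastforce
  have kd_open: "\<And>x. x > 0 \<Longrightarrow> (k has_real_derivative D 1 x) (at x)"
  proof -
    fix x :: real assume x: "x > 0"
    have k1: "(k has_real_derivative D 1 x) (at x within {0..})" using kd x by simp
    have "(k has_real_derivative D 1 x) (at x within {0<..})"
      using k1 by (rule has_field_derivative_subset) auto
    moreover have "at x within {0<..} = at x"
      using x by (intro at_within_open) auto
    ultimately show "(k has_real_derivative D 1 x) (at x)"
      by simp
  qed
  have kmono: "\<And>a b. 0 \<le> a \<Longrightarrow> a \<le> b \<Longrightarrow> k a \<le> k b"
  proof -
    fix a b :: real assume ab: "0 \<le> a" "a \<le> b"
    show "k a \<le> k b"
    proof (rule DERIV_nonneg_imp_increasing_open[OF ab(2)])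
      fix x assume "a < x" "x < b"
      then show "\<exists>y. DERIV k x :> y \<and> y \<ge> 0"
        using kd_open[of x] kderiv_pos[of x] ab by (intro exI[of _ "D 1 x"]) auto
    next
      show "continuous_on {a..b} k" using kcont ab
        by (rule_tac continuous_on_subset) auto
    qed
  qed
  have kge: "\<And>x. 0 \<le> x \<Longrightarrow> k x \<ge> \<gamma>"
    using kmono[of 0] k0 by simp
  have Pdef: "\<And>x. P x = k x * (exp (\<gamma> * x) - 1)" unfolding P_def Psi'_def by simp
  have Pmono: "\<And>a b. 0 \<le> a \<Longrightarrow> a < b \<Longrightarrow> P a < P b"
  proof -
    fix a b :: real assume ab: "0 \<le> a" "a < b"
    have e: "exp (\<gamma> * a) - 1 \<ge> 0" using ab gamma_pos by simp
    have e2: "exp (\<gamma> * a) < exp (\<gamma> * b)" using ab gamma_pos by simp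
    have "k a * (exp (\<gamma> * a) - 1) \<le> k b * (exp (\<gamma> * a) - 1)"
      using kmono[of a b] ab e by (intro mult_right_mono) auto
    also have "\<dots> < k b * (exp (\<gamma> * b) - 1)"
      using kge[of b] ab gamma_pos e2 by (intro mult_strict_left_mono) auto
    finally show "P a < P b" by (simp add: Pdef)
  qed
  have Pcont: "continuous_on {0..} P"
    unfolding Pdef by (intro continuous_intros kcont)
  have P0: "P 0 = 0" by (simp add: Pdef)
  have Pnn: "\<And>x. 0 \<le> x \<Longrightarrow> P x \<ge> 0"
    using Pmono[of 0] P0 by (metis order.order_iff_strict order.refl)
  have Pbig: "\<And>y. \<exists>b\<ge>0. P b \<ge> y"
  proof -
    fix y :: real
    have eg: "exp \<gamma> - 1 > 0" using gamma_pos by simp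
    obtain N where N: "\<And>t. t \<ge> N \<Longrightarrow> k t \<ge> \<bar>y\<bar> / (exp \<gamma> - 1)"
      using k_infty unfolding filterlim_at_top eventually_at_top_linorder by blast
    define t where "t = max N 1"
    have t1: "t \<ge> 1" "t \<ge> N" unfolding t_def by auto
    have "exp \<gamma> \<le> exp (\<gamma> * t)" using t1 gamma_pos by simp
    then have "k t * (exp \<gamma> - 1) \<le> k t * (exp (\<gamma> * t) - 1)"
      using k_nonneg[of t] t1 by (intro mult_left_mono) auto
    moreover have "\<bar>y\<bar> \<le> k t * (exp \<gamma> - 1)"
      using N[OF t1(2)] eg by (simp add: field_simps)
    ultimately have "y \<le> P t" unfolding Pdef by linarith
    then show "\<exists>b\<ge>0. P b \<ge> y" using t1 by (intro exI[of _ t]) auto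
  qed
  have Pinj: "inj_on P {0..}"
    unfolding inj_on_def by (metis atLeast_iff linorder_neqE_linordered_idom order_less_irrefl Pmono)
  have Qeq: "\<And>u t. 0 \<le> t \<Longrightarrow> P t = u \<Longrightarrow> Q u = t"
    unfolding Q_def Phi'_def P_def[symmetric] using Pinj by (auto intro: the_inv_into_f_eq)
  have Qprop: "\<And>u. 0 \<le> u \<Longrightarrow> Q u \<ge> 0 \<and> P (Q u) = u"
  proof -
    fix u :: real assume u: "0 \<le> u"
    obtain b where b: "b \<ge> 0" "P b \<ge> u" using Pbig by blast
    have "\<exists>x. 0 \<le> x \<and> x \<le> b \<and> P x = u"
      using u b P0 by (intro IVT') (auto intro: continuous_on_subset[OF Pcont])
    then obtain t where "0 \<le> t" "P t = u" by blast
    then show "Q u \<ge> 0 \<and> P (Q u) = u" using Qeq by auto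
  qed
  have Qmono: "mono_on {0..} Q"
  proof (rule mono_onI)
    fix r s :: real assume rs: "r \<in> {0..}" "s \<in> {0..}" "r \<le> s"
    show "Q r \<le> Q s"
    proof (rule ccontr)
      assume "\<not> Q r \<le> Q s"
      then have "P (Q s) < P (Q r)" using Qprop[of s] rs by (intro Pmono) auto
      then show False using Qprop[of s] Qprop[of r] rs by auto
    qed
  qed
  define f0 where "f0 u = ln (u / \<gamma> + 1) / \<gamma>" for u
  have Qle: "\<And>u. 0 \<le> u \<Longrightarrow> Q u \<le> f0 u"
  proof -
    fix u :: real assume u: "0 \<le> u"
    define t where "t = Q u"
    have t0: "t \<ge> 0" using Qprop[OF u] unfolding t_def by blast
    have "P t = u" using Qprop[OF u] unfolding t_def by blast
    then have t2: "u = k t * (exp (\<gamma> * t) - 1)" unfolding Pdef by simp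
    have e: "exp (\<gamma> * t) - 1 \<ge> 0" using t0 gamma_pos by simp
    have "\<gamma> * (exp (\<gamma> * t) - 1) \<le> k t * (exp (\<gamma> * t) - 1)"
      using kge[OF t0] e by (rule mult_right_mono)
    then have "exp (\<gamma> * t) - 1 \<le> u / \<gamma>"
      unfolding t2 using gamma_pos by (simp add: pos_le_divide_eq mult.commute)
    then have h: "exp (\<gamma> * t) \<le> u / \<gamma> + 1" by linarith
    have "0 < u / \<gamma> + 1" using h exp_gt_zero[of "\<gamma> * t"] by linarith
    then have "ln (exp (\<gamma> * t)) \<le> ln (u / \<gamma> + 1)"
      using h by (subst ln_le_cancel_iff) auto
    then have "\<gamma> * t \<le> ln (u / \<gamma> + 1)" by simp
    then have "t \<le> ln (u / \<gamma> + 1) / \<gamma>" using gamma_pos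
      by (simp add: pos_le_divide_eq mult.commute)
    then show "Q u \<le> f0 u" unfolding f0_def t_def by simp
  qed
  have Qfar: "\<And>M. M > 0 \<Longrightarrow> \<exists>U\<ge>0. \<forall>u\<ge>U. Q u + 2 * M \<le> f0 u"
  proof -
    fix M :: real assume M: "M > 0"
    define M' where "M' = 2 * exp (2 * M * \<gamma>)"
    have M'2: "M' \<ge> 2" unfolding M'_def using M gamma_pos by simp
    obtain N where N: "\<And>t. t \<ge> N \<Longrightarrow> k t \<ge> M' * \<gamma>"
      using k_infty unfolding filterlim_at_top eventually_at_top_linorder by blast
    define T where "T = max (max N 0) (ln 2 / \<gamma>)"
    have T: "T \<ge> N" "T \<ge> 0" "T \<ge> ln 2 / \<gamma>" unfolding T_def by auto
    have PT: "P T \<ge> 0" using Pnn T(2) by blast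
    show "\<exists>U\<ge>0. \<forall>u\<ge>U. Q u + 2 * M \<le> f0 u"
    proof (intro exI[of _ "P T"] conjI allI impI)
      show "P T \<ge> 0" by (rule PT)
      fix u assume uU: "P T \<le> u"
      have u: "u \<ge> 0" using uU PT by linarith
      define t where "t = Q u"
      have t0: "t \<ge> 0" using Qprop[OF u] unfolding t_def by blast
      have Ptu: "P t = u" using Qprop[OF u] unfolding t_def by blast
      then have t2: "u = k t * (exp (\<gamma> * t) - 1)" unfolding Pdef by simp
      have tT: "t \<ge> T"
      proof (rule ccontr)
        assume "\<not> t \<ge> T"
        then have "P t < P T" using t0 by (intro Pmono) auto
        then show False using uU Ptu by linarith
      qed
      define m where "m = k t / \<gamma>"
      define E where "E = exp (\<gamma> * t)"
      have "k t \<ge> M' * \<gamma>" using N[of t] tT T(1) by linarith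
      then have m: "m \<ge> M'" unfolding m_def using gamma_pos by (simp add: pos_le_divide_eq)
      have l1: "ln 2 \<le> T * \<gamma>" using T(3) gamma_pos by (simp add: pos_divide_le_eq)
      have "T * \<gamma> \<le> t * \<gamma>" using tT gamma_pos by (intro mult_right_mono) auto
      then have "ln 2 \<le> t * \<gamma>" using l1 by linarith
      then have "ln 2 \<le> \<gamma> * t" by (simp add: mult.commute)
      then have "exp (ln 2) \<le> E" unfolding E_def by (subst exp_le_cancel_iff)
      then have E2: "E \<ge> 2" by simp
      have Epos: "E > 0" unfolding E_def by simp
      have uq: "u / \<gamma> + 1 = m * (E - 1) + 1" unfolding m_def E_def t2 using gamma_pos by simp
      have mpos: "m > 0" using m M'2 by linarith
      have "m * E / 2 \<ge> m" using E2 mpos by (simp add: field_simps)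
      then have le1: "m * E / 2 \<le> m * (E - 1) + 1" by (simp add: algebra_simps)
      have pos1: "m * E / 2 > 0" using mpos Epos by simp
      have "ln (m * E / 2) \<le> ln (u / \<gamma> + 1)" unfolding uq
        using le1 pos1 by (subst ln_le_cancel_iff) auto
      moreover have "ln (m * E / 2) = ln m + \<gamma> * t - ln 2"
        using mpos Epos unfolding E_def by (simp add: ln_mult ln_div)
      moreover have "ln m \<ge> ln M'" using m M'2 by simp
      moreover have "ln M' = ln 2 + 2 * M * \<gamma>" unfolding M'_def by (simp add: ln_mult)
      ultimately have "\<gamma> * (t + 2 * M) \<le> ln (u / \<gamma> + 1)" by (simp add: algebra_simps)
      then have "t + 2 * M \<le> ln (u / \<gamma> + 1) / \<gamma>" using gamma_pos
        by (simp add: pos_le_divide_eq mult.commute)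
      then show "Q u + 2 * M \<le> f0 u" unfolding f0_def t_def by simp
    qed
  qed
  have FTC: "\<And>x. 0 \<le> x \<Longrightarrow> (f0 has_integral Phi0 \<gamma> x) {0..x}"
  proof -
    fix x :: real assume x: "0 \<le> x"
    have "(f0 has_integral (Phi0 \<gamma> x - Phi0 \<gamma> 0)) {0..x}"
    proof (rule fundamental_theorem_of_calculus[OF x])
      fix y :: real assume y: "y \<in> {0..x}"
      have "y / \<gamma> \<ge> 0" using y gamma_pos by simp
      then have pos: "y / \<gamma> + 1 > 0" by linarith
      have "(Phi0 \<gamma> has_real_derivative f0 y) (at y)"
        unfolding f0_def using Phi0_deriv[OF gamma_pos pos] .
      then show "(Phi0 \<gamma> has_vector_derivative f0 y) (at y within {0..x})"
        by (simp add: has_real_derivative_iff_has_vector_derivative has_vector_derivative_at_within)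
    qed
    then show "(f0 has_integral Phi0 \<gamma> x) {0..x}" by (simp add: Phi0_def)
  qed
  show ?thesis
    unfolding filterlim_at_top
  proof
    fix Z :: real
    define M where "M = max Z 1"
    have M: "M > 0" "M \<ge> Z" unfolding M_def by auto
    obtain U where U: "U \<ge> 0" "\<And>u. u \<ge> U \<Longrightarrow> Q u + 2 * M \<le> f0 u"
      using Qfar[OF M(1)] by blast
    show "eventually (\<lambda>x. Z \<le> Lambda k \<gamma> x / x) at_top"
      unfolding eventually_at_top_linorder
    proof (intro exI[of _ "2 * U + 1"] allI impI)
      fix x :: real assume x: "x \<ge> 2 * U + 1"
      have x0: "x > 0" "U \<le> x" using x U by auto
      define g where "g u = f0 u - Q u" for u
      have Qi: "Q integrable_on {0..x}"
        by (rule integrable_on_mono_on, rule mono_on_subset[OF Qmono]) auto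
      have fiI: "(f0 has_integral Phi0 \<gamma> x) {0..x}" using FTC x0 by simp
      have fi: "f0 integrable_on {0..x}" using fiI by (rule has_integral_integrable)
      have gi: "g integrable_on {0..x}" unfolding g_def using Qi fi by (intro integrable_diff)
      have L: "Lambda k \<gamma> x = integral {0..x} g"
        unfolding g_def Lambda_def Phi_def Q_def[symmetric]
        using integral_diff[OF fi Qi] FTC[of x] x0 by (simp add: integral_unique)
      have comb: "integral {0..x} g = integral {0..U} g + integral {U..x} g"
        using Henstock_Kurzweil_Integration.integral_combine[OF U(1) x0(2) gi] by simp
      have g1: "g integrable_on {0..U}" using integrable_subinterval_real[OF gi] x0 by auto
      have g2: "g integrable_on {U..x}" using integrable_subinterval_real[OF gi] U by auto
      have "integral {0..U} g \<ge> 0"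
        using g1 by (rule Henstock_Kurzweil_Integration.integral_nonneg) (use Qle in \<open>auto simp: g_def\<close>)
      moreover have "integral {U..x} (\<lambda>_. 2 * M) \<le> integral {U..x} g"
        using integrable_const_ivl g2 by (rule integral_le) (use U(2) in \<open>fastforce simp: g_def\<close>)
      moreover have "integral {U..x} (\<lambda>_. 2 * M) = 2 * M * (x - U)"
        using x0 by simp
      ultimately have "Lambda k \<gamma> x \<ge> 2 * M * (x - U)" using L comb by linarith
      moreover have "2 * M * (x - U) \<ge> M * x"
      proof -
        have "M * (x - 2 * U) \<ge> 0" using M x by (intro mult_nonneg_nonneg) auto
        then show ?thesis by (simp add: algebra_simps)
      qed
      ultimately have "M * x \<le> Lambda k \<gamma> x" by linarith
      then have "M \<le> Lambda k \<gamma> x / x" using x0 by (simp add: field_simps)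
      then show "Z \<le> Lambda k \<gamma> x / x" using M by linarith
    qed
  qed
qed

end
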